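(* Let $G$ be a graph on $n\ge 1$ vertices. Then there exist disjoint subsets $S,T\subseteq V(G)$ such that $(S,T)$ realizes $\mu(G)$, $|S|\le (n+1)/2$, and $|T|=|S|-1$.
   Context: All graphs are finite and simple. For a graph $G=(V,E)$ on $n$ vertices, a fractional vertex cover is a function $f:V\to[0,\infty)$ with $f(u)+f(v)\ge 1$ for every edge $uv\in E$; $\tau^*(G)$ denotes the minimum of $\sum_{v\in V}f(v)$ over all fractional vertex covers. For $E'\subseteq E$ let $G-E'=(V,E\setminus E')$. Define $\mu(G)=\min\{|E'| : E'\subseteq E,\ \tau^*(G-E')<n/2\}$. For disjoint $S,T\subseteq V$, $E_G(S;V\setminus T)$ is the set of edges with both endpoints in $S$ or with one endpoint in $S$ and the other in $V\setminus(S\cup T)$. It holds that $\mu(G)=\min|E_G(S;V\setminus T)|$ over disjoint $S,T$ with $|S|>|T|$; a pair $(S,T)$ of disjoint subsets with $|S|>|T|$ and $|E_G(S;V\setminus T)|=\mu(G)$ is said to realize $\mu(G)$. *)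

theory Defs
  imports Complex_Main
begin

definition simple_graph :: "'a set \<Rightarrow> 'a set set \<Rightarrow> bool" where
  "simple_graph V E \<longleftrightarrow> finite V \<and> (\<forall>e\<in>E. e \<subseteq> V \<and> card e = 2)"

definition frac_vertex_cover :: "'a set \<Rightarrow> 'a set set \<Rightarrow> ('a \<Rightarrow> real) \<Rightarrow> bool" where
  "frac_vertex_cover V E f \<longleftrightarrow>
     (\<forall>v\<in>V. f v \<ge> 0) \<and> (\<forall>u v. {u, v} \<in> E \<longrightarrow> f u + f v \<ge> 1)"

definition tau_star :: "'a set \<Rightarrow> 'a set set \<Rightarrow> real" where
  "tau_star V E = Inf {(\<Sum>v\<in>V. f v) | f. frac_vertex_cover V E f}"

definition mu :: "'a set \<Rightarrow> 'a set set \<Rightarrow> nat" where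
  "mu V E = (LEAST k. \<exists>E'. E' \<subseteq> E \<and> card E' = k \<and> tau_star V (E - E') < real (card V) / 2)"

definition edges_ST :: "'a set \<Rightarrow> 'a set set \<Rightarrow> 'a set \<Rightarrow> 'a set \<Rightarrow> 'a set set" where
  "edges_ST V E S T = {e \<in> E. e \<subseteq> S \<or>
      (\<exists>u v. e = {u, v} \<and> u \<in> S \<and> v \<in> V - (S \<union> T))}"

definition realizes_mu :: "'a set \<Rightarrow> 'a set set \<Rightarrow> 'a set \<Rightarrow> 'a set \<Rightarrow> bool" where
  "realizes_mu V E S T \<longleftrightarrow> S \<subseteq> V \<and> T \<subseteq> V \<and> S \<inter> T = {} \<and> card S > card T
     \<and> card (edges_ST V E S T) = mu V E"

end

theory Submission
  imports Defs
begin

lemma sum_ind_const: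
  assumes "finite V" "L \<subseteq> V"
  shows "(\<Sum>v\<in>V. (if v \<in> L then (c::real) else 0)) = c * card L"
proof -
  have "(\<Sum>v\<in>V. (if v \<in> L then c else 0)) = (\<Sum>v\<in>V \<inter> L. c)"
    by (rule sum.inter_restrict[symmetric]) (use assms in auto)
  also have "V \<inter> L = L" using assms by auto
  finally show ?thesis by simp
qed

lemma key:
  assumes fin: "finite V" and sub: "\<forall>e\<in>H. e \<subseteq> V"
  shows "frac_vertex_cover V H f \<Longrightarrow> (\<Sum>v\<in>V. f v) < real (card V) / 2 \<Longrightarrow>
     \<exists>S T. S \<subseteq> V \<and> T \<subseteq> V \<and> S \<inter> T = {} \<and> card T < card S \<and>
        (\<forall>u v. {u,v} \<in> H \<longrightarrow> u \<in> S \<longrightarrow> v \<in> T)"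
proof (induction "card {v\<in>V. f v \<noteq> 1/2}" arbitrary: f rule: less_induct)
  case less
  define L where "L = {v\<in>V. f v < 1/2}"
  define U where "U = {v\<in>V. f v > 1/2}"
  have cov: "\<And>u v. {u,v} \<in> H \<Longrightarrow> f u + f v \<ge> 1" and nn: "\<And>v. v \<in> V \<Longrightarrow> f v \<ge> 0"
    using less.prems(1) unfolding frac_vertex_cover_def by auto
  have inV: "\<And>u v. {u,v} \<in> H \<Longrightarrow> u \<in> V \<and> v \<in> V" using sub by auto
  show ?case
  proof (cases "card U < card L")
    case True
    have "\<forall>u v. {u,v} \<in> H \<longrightarrow> u \<in> L \<longrightarrow> v \<in> U"
    proof (intro allI impI)
      fix u v assume "{u,v} \<in> H" "u \<in> L"
      then show "v \<in> U" using cov[of u v] inV[of u v] unfolding L_def U_def by auto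
    qed
    moreover have "L \<inter> U = {}" unfolding L_def U_def by auto
    ultimately show ?thesis using True unfolding L_def U_def
      by (intro exI[of _ L] exI[of _ U]) (auto simp: L_def U_def)
  next
    case False
    define N where "N = {v\<in>V. f v \<noteq> 1/2}"
    have finN: "finite N" using fin unfolding N_def by auto
    have Nne: "N \<noteq> {}"
    proof
      assume "N = {}"
      then have "\<forall>v\<in>V. f v = 1/2" unfolding N_def by auto
      then have "(\<Sum>v\<in>V. f v) = (\<Sum>v\<in>V. 1/2)" by (intro sum.cong) auto
      then have "(\<Sum>v\<in>V. f v) = real (card V) / 2" by simp
      with less.prems(2) show False by simp
    qed
    define \<delta> where "\<delta> = Min ((\<lambda>v. \<bar>f v - 1/2\<bar>) ` N)"
    have \<delta>le: "\<And>v. v \<in> N \<Longrightarrow> \<delta> \<le> \<bar>f v - 1/2\<bar>" unfolding \<delta>_def using finN by auto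
    obtain w where wN: "w \<in> N" and w\<delta>: "\<bar>f w - 1/2\<bar> = \<delta>"
    proof -
      have "\<delta> \<in> (\<lambda>v. \<bar>f v - 1/2\<bar>) ` N"
        unfolding \<delta>_def using finN Nne by (intro Min_in) auto
      then show ?thesis using that by auto
    qed
    have \<delta>pos: "\<delta> > 0" using wN w\<delta> unfolding N_def by auto
    define g where "g v = (if f v < 1/2 then f v + \<delta> else if f v > 1/2 then f v - \<delta> else f v)" for v
    have gcov: "frac_vertex_cover V H g"
      unfolding frac_vertex_cover_def
    proof (intro conjI allI ballI impI)
      fix v assume "v \<in> V" then show "g v \<ge> 0"
        using nn[of v] \<delta>pos \<delta>le[of v] unfolding g_def N_def by auto
    next
      fix u v assume e: "{u,v} \<in> H"
      have c: "f u + f v \<ge> 1" using cov[OF e] .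
      have uu: "u \<in> V" "v \<in> V" using inV[OF e] by auto
      have du: "f u \<noteq> 1/2 \<Longrightarrow> \<delta> \<le> \<bar>f u - 1/2\<bar>" using \<delta>le[of u] uu unfolding N_def by auto
      have dv: "f v \<noteq> 1/2 \<Longrightarrow> \<delta> \<le> \<bar>f v - 1/2\<bar>" using \<delta>le[of v] uu unfolding N_def by auto
      show "g u + g v \<ge> 1" using c du dv unfolding g_def by (auto split: if_splits)
    qed
    have gform: "\<And>v. v \<in> V \<Longrightarrow> g v = f v + (if v \<in> L then \<delta> else 0) - (if v \<in> U then \<delta> else 0)"
      unfolding g_def L_def U_def by auto
    have "(\<Sum>v\<in>V. g v) = (\<Sum>v\<in>V. f v) + \<delta> * card L - \<delta> * card U"
    proof -
      have "(\<Sum>v\<in>V. g v) = (\<Sum>v\<in>V. f v + (if v \<in> L then \<delta> else 0) - (if v \<in> U then \<delta> else 0))"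
        using gform by (intro sum.cong) auto
      also have "\<dots> = (\<Sum>v\<in>V. f v) + (\<Sum>v\<in>V. (if v \<in> L then \<delta> else 0)) - (\<Sum>v\<in>V. (if v \<in> U then \<delta> else 0))"
        by (simp add: sum.distrib sum_subtractf)
      also have "\<dots> = (\<Sum>v\<in>V. f v) + \<delta> * card L - \<delta> * card U"
        using sum_ind_const[OF fin, of L \<delta>] sum_ind_const[OF fin, of U \<delta>]
        unfolding L_def U_def by auto
      finally show ?thesis .
    qed
    moreover have "\<delta> * card L \<le> \<delta> * card U" using False \<delta>pos by simp
    ultimately have gsum: "(\<Sum>v\<in>V. g v) < real (card V) / 2" using less.prems(2) by linarith
    have psub: "{v\<in>V. g v \<noteq> 1/2} \<subset> N"
    proof
      show "{v\<in>V. g v \<noteq> 1/2} \<subseteq> N" unfolding N_def g_def by auto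
      have "g w = 1/2" using w\<delta> unfolding g_def by (auto simp: abs_if split: if_splits)
      then show "{v\<in>V. g v \<noteq> 1/2} \<noteq> N" using wN by auto
    qed
    have "card {v\<in>V. g v \<noteq> 1/2} < card {v\<in>V. f v \<noteq> 1/2}"
      using psubset_card_mono[OF finN psub] unfolding N_def .
    from less.hyps[OF this gcov gsum] show ?thesis .
  qed
qed


lemma tau_le:
  assumes "finite V" "frac_vertex_cover V H f"
  shows "tau_star V H \<le> (\<Sum>v\<in>V. f v)"
  unfolding tau_star_def
proof (rule cInf_lower)
  show "(\<Sum>v\<in>V. f v) \<in> {(\<Sum>v\<in>V. f v) | f. frac_vertex_cover V H f}" using assms by auto
  show "bdd_below {(\<Sum>v\<in>V. f v) | f. frac_vertex_cover V H f}"
    unfolding bdd_below_def frac_vertex_cover_def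
    by (rule exI[of _ 0]) (auto intro: sum_nonneg)
qed

lemma tau_lt:
  assumes "tau_star V H < c"
  shows "\<exists>f. frac_vertex_cover V H f \<and> (\<Sum>v\<in>V. f v) < c"
proof -
  have "frac_vertex_cover V H (\<lambda>_. 1)" unfolding frac_vertex_cover_def by auto
  then have "{(\<Sum>v\<in>V. f v) | f. frac_vertex_cover V H f} \<noteq> {}" by blast
  from cInf_lessD[OF this assms[unfolded tau_star_def]] show ?thesis by auto
qed

lemma edges_mono:
  assumes "S' \<subseteq> S"
  shows "edges_ST V E S' T \<subseteq> edges_ST V E S T"
  using assms unfolding edges_ST_def by blast

theorem lemma16:
  fixes V :: "'a set" and E :: "'a set set"
  assumes "simple_graph V E" and "card V \<ge> 1"
  shows "\<exists>S T. realizes_mu V E S T \<and> real (card S) \<le> (real (card V) + 1) / 2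
              \<and> card T = card S - 1"
proof -
  have finV: "finite V" and eV: "\<And>e. e \<in> E \<Longrightarrow> e \<subseteq> V \<and> card e = 2"
    using assms(1) unfolding simple_graph_def by auto
  have finE: "finite E"
    by (rule finite_subset[of E "Pow V"]) (use eV finV in auto)
  have finES: "\<And>S T. finite (edges_ST V E S T)"
    using finE unfolding edges_ST_def by auto
  define P where "P S T \<longleftrightarrow> S \<subseteq> V \<and> T \<subseteq> V \<and> S \<inter> T = {} \<and> card T < card S" for S T
  define m where "m = (LEAST k. \<exists>S T. P S T \<and> card (edges_ST V E S T) = k)"
  obtain v where v: "v \<in> V" using assms(2) by (metis card.empty not_one_le_zero equals0I)
  have "P {v} {}" using v unfolding P_def by auto
  then have ex: "\<exists>k S T. P S T \<and> card (edges_ST V E S T) = k" by blast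
  obtain S0 T0 where P0: "P S0 T0" and c0: "card (edges_ST V E S0 T0) = m"
    using LeastI_ex[OF ex] unfolding m_def by blast
  have mle: "\<And>S T. P S T \<Longrightarrow> m \<le> card (edges_ST V E S T)"
    unfolding m_def by (rule Least_le) blast
  have exmu: "\<exists>E''. E'' \<subseteq> E \<and> card E'' = m \<and> tau_star V (E - E'') < real (card V) / 2"
  proof -
    define E' where "E' = edges_ST V E S0 T0"
    define f where "f v = (if v \<in> S0 then 0 else if v \<in> T0 then 1 else (1/2::real))" for v
    have cov: "frac_vertex_cover V (E - E') f"
      unfolding frac_vertex_cover_def
    proof (intro conjI allI ballI impI)
      fix v show "f v \<ge> 0" unfolding f_def by auto
    next
      fix u v assume e: "{u,v} \<in> E - E'"
      then have uv: "u \<in> V" "v \<in> V" using eV by auto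
      have n1: "\<not> {u,v} \<subseteq> S0" using e unfolding E'_def edges_ST_def by auto
      have n2: "u \<in> S0 \<Longrightarrow> v \<in> T0"
        using e uv unfolding E'_def edges_ST_def by blast
      have n3: "v \<in> S0 \<Longrightarrow> u \<in> T0"
      proof -
        have "{v,u} \<in> E - E'" using e by (simp add: insert_commute)
        then show "v \<in> S0 \<Longrightarrow> u \<in> T0" using uv unfolding E'_def edges_ST_def by blast
      qed
      show "f u + f v \<ge> 1" using n1 n2 n3 P0 unfolding f_def P_def by auto
    qed
    have fform: "\<And>v. v \<in> V \<Longrightarrow> f v = 1/2 - (if v \<in> S0 then 1/2 else 0) + (if v \<in> T0 then 1/2 else 0)"
      using P0 unfolding f_def P_def by auto
    have "(\<Sum>v\<in>V. f v) = (\<Sum>v\<in>V. 1/2 - (if v \<in> S0 then 1/2 else 0) + (if v \<in> T0 then (1/2::real) else 0))"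
      using fform by (intro sum.cong) auto
    also have "\<dots> = (\<Sum>v\<in>V. 1/2) - (\<Sum>v\<in>V. (if v \<in> S0 then 1/2 else 0)) + (\<Sum>v\<in>V. (if v \<in> T0 then (1/2::real) else 0))"
      by (simp add: sum.distrib sum_subtractf)
    also have "\<dots> = real (card V) / 2 - 1/2 * card S0 + 1/2 * card T0"
      using sum_ind_const[OF finV, of S0 "1/2"] sum_ind_const[OF finV, of T0 "1/2"] P0
      unfolding P_def by auto
    finally have "(\<Sum>v\<in>V. f v) < real (card V) / 2" using P0 unfolding P_def by auto
    then have "tau_star V (E - E') < real (card V) / 2" using tau_le[OF finV cov] by linarith
    moreover have "E' \<subseteq> E" unfolding E'_def edges_ST_def by auto
    ultimately show ?thesis using c0 unfolding E'_def by blast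
  qed
  have mu_le: "mu V E \<le> m" unfolding mu_def by (rule Least_le) (rule exmu)
  have le_mu: "m \<le> mu V E"
  proof -
    have "\<exists>k E'. E' \<subseteq> E \<and> card E' = k \<and> tau_star V (E - E') < real (card V) / 2"
      using exmu by blast
    from LeastI_ex[OF this] obtain E' where E': "E' \<subseteq> E" "card E' = mu V E"
        "tau_star V (E - E') < real (card V) / 2"
      unfolding mu_def by blast
    obtain f where f: "frac_vertex_cover V (E - E') f" "(\<Sum>v\<in>V. f v) < real (card V) / 2"
      using tau_lt[OF E'(3)] by blast
    have "\<forall>e\<in>E - E'. e \<subseteq> V" using eV by auto
    from key[OF finV this f] obtain S T where ST: "S \<subseteq> V" "T \<subseteq> V" "S \<inter> T = {}" "card T < card S"
      "\<forall>u v. {u,v} \<in> E - E' \<longrightarrow> u \<in> S \<longrightarrow> v \<in> T" by blast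
    have "edges_ST V E S T \<subseteq> E'"
    proof
      fix e assume e: "e \<in> edges_ST V E S T"
      show "e \<in> E'"
      proof (rule ccontr)
        assume ne: "e \<notin> E'"
        have eE: "e \<in> E" using e unfolding edges_ST_def by auto
        from e consider "e \<subseteq> S" | u v where "e = {u,v}" "u \<in> S" "v \<in> V - (S \<union> T)"
          unfolding edges_ST_def by blast
        then show False
        proof cases
          case 1
          obtain u v where "e = {u,v}" "u \<noteq> v" using eV[OF eE] by (meson card_2_iff)
          then show False using 1 ST(3,5) eE ne by auto
        next
          case 2
          then show False using ST(5) eE ne by auto
        qed
      qed
    qed
    then have "card (edges_ST V E S T) \<le> mu V E" using E' finite_subset[OF E'(1) finE]
      by (metis card_mono)
    moreover have "P S T" using ST unfolding P_def by auto
    ultimately show ?thesis using mle by fastforce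
  qed
  have mu: "mu V E = m" using mu_le le_mu by simp
  obtain S' where S': "S' \<subseteq> S0" "card S' = card T0 + 1" "finite S'"
    using P0 unfolding P_def by (metis Suc_eq_plus1 Suc_leI obtain_subset_with_card_n)
  have PS': "P S' T0" using P0 S' unfolding P_def by auto
  have "card (edges_ST V E S' T0) \<le> m"
    using c0 edges_mono[OF S'(1), of V E T0] finES by (metis card_mono)
  then have real: "realizes_mu V E S' T0"
    using mle[OF PS'] PS' mu unfolding realizes_mu_def P_def by auto
  have "card S' + card T0 \<le> card V"
  proof -
    have "card (S' \<union> T0) = card S' + card T0"
      using PS' finV unfolding P_def by (meson card_Un_disjoint finite_subset)
    moreover have "card (S' \<union> T0) \<le> card V" using PS' finV unfolding P_def by (meson card_mono le_sup_iff)
    ultimately show ?thesis by simp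
  qed
  then show ?thesis using real S' by (intro exI[of _ S'] exI[of _ T0]) auto
qed

end
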